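(* Let $A\in\mathbb{R}^{m\times n}$ with $A\geq 0$ and $A^{\dagger}\geq 0$, and let $(U_k^{(i)},V_k^{(i)},E_k)_{k=1}^{p}$, $i=1,2$, be two proper weak regular multisplittings of $A$ (with the same weighting matrices $E_k$) such that $R(E_k)\subseteq R(A^{T})$ for each $k=1,\ldots,p$. If $V_k^{(2)}\geq V_k^{(1)}$ for each $k=1,\ldots,p$, then $\rho(H_1)\leq\rho(H_2)<1$, where $H_i=\sum_{k=1}^{p}E_k[U_k^{(i)}]^{\dagger}V_k^{(i)}$ for $i=1,2$.
   Context: $A^{\dagger}$ denotes the Moore–Penrose inverse, $\rho(\cdot)$ the spectral radius, $R(\cdot)$, $N(\cdot)$ range and null space; inequalities are entrywise. A splitting $A=U-V$ is proper if $R(U)=R(A)$ and $N(U)=N(A)$; a proper splitting is proper weak regular if $U^{\dagger}\geq 0$ and $U^{\dagger}V\geq 0$. A proper weak regular multisplitting of $A$ is a triplet $(U_k,V_k,E_k)_{k=1}^{p}$ where each $A=U_k-V_k$ is a proper weak regular splitting and each $E_k\geq 0$ is an $n\times n$ diagonal matrix with $\sum_{k=1}^{p}E_k=I_n$. *)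

theory Defs
  imports "Jordan_Normal_Form.Spectral_Radius"
begin

text \<open>Matrices are Jordan_Normal_Form matrices ('a mat) with explicit carrier dimensions.
  The order on matrices from that library is entrywise (and requires equal dimensions).\<close>

definition penrose_conds :: "real mat \<Rightarrow> real mat \<Rightarrow> bool" where
  "penrose_conds A X \<longleftrightarrow>
     X \<in> carrier_mat (dim_col A) (dim_row A) \<and>
     A * X * A = A \<and> X * A * X = X \<and>
     transpose_mat (A * X) = A * X \<and> transpose_mat (X * A) = X * A"

definition mp_inverse :: "real mat \<Rightarrow> real mat" where
  "mp_inverse A = (THE X. penrose_conds A X)"

definition range_mat :: "real mat \<Rightarrow> real vec set" where
  "range_mat A = {A *\<^sub>v x | x. x \<in> carrier_vec (dim_col A)}"

definition null_mat :: "real mat \<Rightarrow> real vec set" where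
  "null_mat A = {x \<in> carrier_vec (dim_col A). A *\<^sub>v x = 0\<^sub>v (dim_row A)}"

definition spec_rad :: "real mat \<Rightarrow> real" where
  "spec_rad A = spectral_radius (map_mat complex_of_real A)"

definition proper_splitting :: "real mat \<Rightarrow> real mat \<Rightarrow> real mat \<Rightarrow> bool" where
  "proper_splitting A U V \<longleftrightarrow>
     U \<in> carrier_mat (dim_row A) (dim_col A) \<and> V \<in> carrier_mat (dim_row A) (dim_col A) \<and>
     A = U - V \<and> range_mat U = range_mat A \<and> null_mat U = null_mat A"

definition proper_weak_regular_splitting :: "real mat \<Rightarrow> real mat \<Rightarrow> real mat \<Rightarrow> bool" where
  "proper_weak_regular_splitting A U V \<longleftrightarrow>
     proper_splitting A U V \<and>
     0\<^sub>m (dim_col A) (dim_row A) \<le> mp_inverse U \<and>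
     0\<^sub>m (dim_col A) (dim_col A) \<le> mp_inverse U * V"

fun mat_sum :: "nat \<Rightarrow> nat \<Rightarrow> (nat \<Rightarrow> real mat) \<Rightarrow> nat \<Rightarrow> real mat" where
  "mat_sum nr nc f 0 = 0\<^sub>m nr nc"
| "mat_sum nr nc f (Suc k) = mat_sum nr nc f k + f k"

text \<open>Proper weak regular multisplitting (U_k, V_k, E_k), k = 0..p-1 (0-based indexing).\<close>
definition proper_weak_regular_multisplitting ::
  "real mat \<Rightarrow> nat \<Rightarrow> (nat \<Rightarrow> real mat) \<Rightarrow> (nat \<Rightarrow> real mat) \<Rightarrow> (nat \<Rightarrow> real mat) \<Rightarrow> bool" where
  "proper_weak_regular_multisplitting A p U V E \<longleftrightarrow>
     (\<forall>k<p. proper_weak_regular_splitting A (U k) (V k) \<and>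
            E k \<in> carrier_mat (dim_col A) (dim_col A) \<and> diagonal_mat (E k) \<and>
            0\<^sub>m (dim_col A) (dim_col A) \<le> E k) \<and>
     mat_sum (dim_col A) (dim_col A) E p = 1\<^sub>m (dim_col A)"

definition iter_mat :: "real mat \<Rightarrow> nat \<Rightarrow> (nat \<Rightarrow> real mat) \<Rightarrow> (nat \<Rightarrow> real mat) \<Rightarrow> (nat \<Rightarrow> real mat) \<Rightarrow> real mat" where
  "iter_mat A p U V E = mat_sum (dim_col A) (dim_col A) (\<lambda>k. E k * mp_inverse (U k) * V k) p"

end

theory Submission imports Defs begin

lemma mat_sum_carrier: "(\<And>k. k < p \<Longrightarrow> f k \<in> carrier_mat nr nc) \<Longrightarrow> mat_sum nr nc f p \<in> carrier_mat nr nc"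
  by (induction p) auto

lemma mat_sum_index: "(\<And>k. k < p \<Longrightarrow> f k \<in> carrier_mat nr nc) \<Longrightarrow> i < nr \<Longrightarrow> j < nc \<Longrightarrow>
  mat_sum nr nc f p $$ (i,j) = (\<Sum>k<p. f k $$ (i,j))"
proof (induction p)
  case 0 then show ?case by simp
next
  case (Suc p)
  have c: "mat_sum nr nc f p \<in> carrier_mat nr nc" using Suc.prems by (intro mat_sum_carrier) auto
  have fp: "f p \<in> carrier_mat nr nc" using Suc.prems by auto
  have "(mat_sum nr nc f p + f p) $$ (i,j) = mat_sum nr nc f p $$ (i,j) + f p $$ (i,j)"
    using c fp Suc.prems by (intro index_add_mat) auto
  then show ?case using Suc c by simp
qed

lemma mat_eq_by_vec:
  assumes "M1 \<in> carrier_mat nr nc" "M2 \<in> carrier_mat nr nc"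
    and "\<And>v. v \<in> carrier_vec nc \<Longrightarrow> M1 *\<^sub>v v = M2 *\<^sub>v (v :: 'a :: semiring_1 vec)"
  shows "M1 = M2"
proof (rule eq_matI)
  fix i j assume ij: "i < dim_row M2" "j < dim_col M2"
  have "M1 *\<^sub>v unit_vec nc j = M2 *\<^sub>v unit_vec nc j" using assms by simp
  then have "(M1 *\<^sub>v unit_vec nc j) $ i = (M2 *\<^sub>v unit_vec nc j) $ i" by simp
  moreover have "(M1 *\<^sub>v unit_vec nc j) $ i = M1 $$ (i,j)"
    using assms(1,2) ij by (simp add: scalar_prod_right_unit[of j nc "row M1 i"])
  moreover have "(M2 *\<^sub>v unit_vec nc j) $ i = M2 $$ (i,j)"
    using assms(1,2) ij by (simp add: scalar_prod_right_unit[of j nc "row M2 i"])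
  ultimately show "M1 $$ (i,j) = M2 $$ (i,j)" by metis
qed (use assms in auto)

lemma self_scalar_zero:
  fixes w :: "real vec"
  assumes "w \<in> carrier_vec m" "w \<bullet> w = 0" shows "w = 0\<^sub>v m"
proof -
  have "(\<Sum>i\<in>{0..<m}. w $ i * w $ i) = 0" using assms by (simp add: scalar_prod_def)
  then have "\<forall>i\<in>{0..<m}. w $ i * w $ i = 0" by (subst sum_nonneg_eq_0_iff[symmetric]) auto
  then show ?thesis using assms by (intro eq_vecI) auto
qed

lemma mp_left_inv:
  fixes M :: "real mat"
  assumes M: "M \<in> carrier_mat m n"
    and inj: "\<forall>x. x \<in> carrier_vec n \<longrightarrow> M *\<^sub>v x = 0\<^sub>v m \<longrightarrow> x = 0\<^sub>v n"
  shows "mp_inverse M \<in> carrier_mat n m \<and> mp_inverse M * M = 1\<^sub>m n \<and> M * mp_inverse M * M = M"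
proof -
  define S where "S = transpose_mat M * M"
  have S: "S \<in> carrier_mat n n" using M by (simp add: S_def)
  have "det S \<noteq> 0"
  proof
    assume "det S = 0"
    then obtain v where v: "v \<in> carrier_vec n" "v \<noteq> 0\<^sub>v n" "S *\<^sub>v v = 0\<^sub>v n"
      using det_0_iff_vec_prod_zero[OF S] by auto
    have Mv: "M *\<^sub>v v \<in> carrier_vec m" using M v by simp
    have "(transpose_mat M *\<^sub>v (M *\<^sub>v v)) \<bullet> v = (M *\<^sub>v v) \<bullet> (M *\<^sub>v v)"
      by (rule transpose_vec_mult_scalar[OF M v(1) Mv])
    moreover have "transpose_mat M *\<^sub>v (M *\<^sub>v v) = S *\<^sub>v v" using M v unfolding S_def
      by (subst assoc_mult_mat_vec) auto
    ultimately have "(M *\<^sub>v v) \<bullet> (M *\<^sub>v v) = 0" using v by simp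
    then have "M *\<^sub>v v = 0\<^sub>v m" using self_scalar_zero Mv by blast
    then show False using inj v by blast
  qed
  from det_non_zero_imp_unit[OF S this, of undefined]
  obtain T where T: "T \<in> carrier_mat n n" "T * S = 1\<^sub>m n" "S * T = 1\<^sub>m n"
    unfolding Units_def ring_mat_def by auto
  have "transpose_mat S = transpose_mat M * transpose_mat (transpose_mat M)"
    unfolding S_def by (rule transpose_mult) (use M in auto)
  then have St: "transpose_mat S = S" unfolding S_def by simp
  have tST: "transpose_mat (S * T) = transpose_mat T * transpose_mat S"
    using transpose_mult[OF S T(1)] .
  have TtS: "transpose_mat T * S = 1\<^sub>m n"
    using tST unfolding St T(3) by simp
  have "transpose_mat T = transpose_mat T * 1\<^sub>m n" using T(1) by simp
  also have "\<dots> = transpose_mat T * (S * T)" by (simp only: T(3))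
  also have "\<dots> = (transpose_mat T * S) * T" using T(1) S by (simp only: assoc_mult_mat[symmetric, of "transpose_mat T" n n S n T n] transpose_carrier_mat)
  also have "\<dots> = T" unfolding TtS using T(1) by simp
  finally have Tt: "transpose_mat T = T" .
  define X where "X = T * transpose_mat M"
  have Mt: "transpose_mat M \<in> carrier_mat n m" using M by simp
  have X: "X \<in> carrier_mat n m" using T(1) Mt unfolding X_def by (rule mult_carrier_mat)
  have "X * M = T * (transpose_mat M * M)" unfolding X_def
    by (rule assoc_mult_mat[OF T(1) Mt M])
  then have XM: "X * M = 1\<^sub>m n" using T(2) unfolding S_def by simp
  have pc: "penrose_conds M X"
    unfolding penrose_conds_def
  proof (intro conjI)
    show "X \<in> carrier_mat (dim_col M) (dim_row M)" using X M by simp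
    have "M * X * M = M * (X * M)" by (rule assoc_mult_mat[OF M X M])
    then show "M * X * M = M" using M unfolding XM by simp
    show "X * M * X = X" unfolding XM using X by simp
    show "transpose_mat (X * M) = X * M" unfolding XM by simp
    have "transpose_mat (M * X) = transpose_mat X * transpose_mat M" using transpose_mult[OF M X] .
    also have "transpose_mat X = transpose_mat (transpose_mat M) * transpose_mat T" unfolding X_def
      by (rule transpose_mult[OF T(1) Mt])
    also have "\<dots> = M * T" unfolding Tt by simp
    also have "M * T * transpose_mat M = M * X" unfolding X_def by (rule assoc_mult_mat[OF M T(1) Mt])
    finally show "transpose_mat (M * X) = M * X" .
  qed
  have uniq: "Y = X" if Y: "penrose_conds M Y" for Y
  proof -
    have Yc: "Y \<in> carrier_mat n m" and MYM: "M * Y * M = M" and sym: "transpose_mat (M * Y) = M * Y"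
      using Y M unfolding penrose_conds_def by auto
    have MY: "M * Y \<in> carrier_mat m m" using M Yc by (rule mult_carrier_mat)
    have "transpose_mat M = transpose_mat (M * Y * M)" unfolding MYM ..
    also have "\<dots> = transpose_mat M * transpose_mat (M * Y)"
      by (rule transpose_mult[OF MY M])
    also have "\<dots> = transpose_mat M * (M * Y)" unfolding sym ..
    also have "\<dots> = S * Y" unfolding S_def by (rule assoc_mult_mat[symmetric, OF Mt M Yc])
    finally have tM: "transpose_mat M = S * Y" .
    have "X = T * (S * Y)" unfolding X_def tM ..
    also have "\<dots> = (T * S) * Y" by (rule assoc_mult_mat[symmetric, OF T(1) S Yc])
    also have "\<dots> = Y" unfolding T(2) using Yc by simp
    finally show ?thesis by simp
  qed
  have mpX: "mp_inverse M = X" unfolding mp_inverse_def by (rule the_equality[where P="penrose_conds M", OF pc uniq])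
  have "M * X * M = M" using pc unfolding penrose_conds_def by blast
  then show ?thesis unfolding mpX using X XM by blast
qed

lemma mult_entry:
  fixes A B :: "real mat"
  assumes "A \<in> carrier_mat a b" "B \<in> carrier_mat b c" "i < a" "j < c"
  shows "(A * B) $$ (i,j) = (\<Sum>k<b. A $$ (i,k) * B $$ (k,j))"
proof -
  have "(A * B) $$ (i,j) = row A i \<bullet> col B j" using assms by simp
  also have "\<dots> = (\<Sum>k\<in>{0..<b}. row A i $ k * col B j $ k)" using assms by (simp add: scalar_prod_def)
  also have "\<dots> = (\<Sum>k\<in>{0..<b}. A $$ (i,k) * B $$ (k,j))" using assms by (intro sum.cong) auto
  finally show ?thesis by (simp add: atLeast0LessThan)
qed

lemma sum_single:
  fixes f :: "nat \<Rightarrow> real"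
  assumes "i < n" "\<And>k. k < n \<Longrightarrow> k \<noteq> i \<Longrightarrow> f k = 0"
  shows "(\<Sum>k<n. f k) = f i"
proof -
  have "(\<Sum>k<n. f k) = (\<Sum>k<n. if k = i then f i else 0)" using assms by (intro sum.cong) auto
  also have "\<dots> = f i" using assms by simp
  finally show ?thesis .
qed

lemma split_diag:
  fixes A U V L :: "real mat"
  assumes A: "A \<in> carrier_mat m n" and Apos: "0\<^sub>m m n \<le> A"
    and L: "L \<in> carrier_mat n m" and LA: "L * A = 1\<^sub>m n" and ALA: "A * L * A = A"
    and Ainj: "\<forall>x. x \<in> carrier_vec n \<longrightarrow> A *\<^sub>v x = 0\<^sub>v m \<longrightarrow> x = 0\<^sub>v n"
    and S: "proper_weak_regular_splitting A U V"
  shows "mp_inverse U \<in> carrier_mat n m" "mp_inverse U * V \<in> carrier_mat n n"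
    "\<forall>i<n. \<forall>j<n. i \<noteq> j \<longrightarrow> (mp_inverse U * V) $$ (i,j) = 0"
    "\<forall>i<n. 0 < 1 + (L * V) $$ (i,i) \<and> (mp_inverse U * V) $$ (i,i) = 1 - 1 / (1 + (L * V) $$ (i,i))"
    "\<forall>i<n. 0 \<le> (mp_inverse U * V) $$ (i,i)"
proof -
  define P where "P = mp_inverse U"
  have U: "U \<in> carrier_mat m n" and V: "V \<in> carrier_mat m n" and AUV: "A = U - V"
    and rg: "range_mat U = range_mat A" and nl: "null_mat U = null_mat A"
    and Ppos: "0\<^sub>m n m \<le> P" and Gpos: "0\<^sub>m n n \<le> P * V"
    using S A unfolding proper_weak_regular_splitting_def proper_splitting_def P_def by auto
  have Uinj: "\<forall>x. x \<in> carrier_vec n \<longrightarrow> U *\<^sub>v x = 0\<^sub>v m \<longrightarrow> x = 0\<^sub>v n"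
  proof (intro allI impI)
    fix x assume x: "x \<in> carrier_vec n" "U *\<^sub>v x = 0\<^sub>v m"
    have "x \<in> null_mat U" using x U unfolding null_mat_def by auto
    then have "x \<in> null_mat A" using nl by simp
    then show "x = 0\<^sub>v n" using Ainj A unfolding null_mat_def by auto
  qed
  from mp_left_inv[OF U Uinj] have P: "P \<in> carrier_mat n m" and PU: "P * U = 1\<^sub>m n"
    unfolding P_def by auto
  show "mp_inverse U \<in> carrier_mat n m" using P unfolding P_def .
  define G where "G = P * V"
  define F where "F = L * V"
  have G: "G \<in> carrier_mat n n" unfolding G_def using P V by (rule mult_carrier_mat)
  show "mp_inverse U * V \<in> carrier_mat n n" using G unfolding G_def P_def .
  have Pnn: "P $$ (i,k) \<ge> 0" if "i < n" "k < m" for i k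
    using Ppos that P unfolding less_eq_mat_def by auto
  have Ann: "A $$ (k,j) \<ge> 0" if "k < m" "j < n" for k j
    using Apos that A unfolding less_eq_mat_def by auto
  have Gnn: "G $$ (i,j) \<ge> 0" if "i < n" "j < n" for i j
    using Gpos that G unfolding less_eq_mat_def G_def by auto
  have Aent: "A $$ (k,j) = U $$ (k,j) - V $$ (k,j)" if "k < m" "j < n" for k j
    using that V unfolding AUV by simp
  have Dent: "(P * A) $$ (i,j) = (if i = j then 1 else 0) - G $$ (i,j)" if ij: "i < n" "j < n" for i j
  proof -
    have "(P * A) $$ (i,j) = (\<Sum>k<m. P $$ (i,k) * A $$ (k,j))" by (rule mult_entry[OF P A ij])
    also have "\<dots> = (\<Sum>k<m. P $$ (i,k) * U $$ (k,j)) - (\<Sum>k<m. P $$ (i,k) * V $$ (k,j))"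
      using Aent ij by (simp add: right_diff_distrib sum_subtractf)
    also have "(\<Sum>k<m. P $$ (i,k) * U $$ (k,j)) = (P * U) $$ (i,j)" by (rule mult_entry[OF P U ij, symmetric])
    also have "(\<Sum>k<m. P $$ (i,k) * V $$ (k,j)) = G $$ (i,j)" unfolding G_def by (rule mult_entry[OF P V ij, symmetric])
    finally show ?thesis unfolding PU using ij by simp
  qed
  have Dnn: "(P * A) $$ (i,j) \<ge> 0" if ij: "i < n" "j < n" for i j
  proof -
    have "(P * A) $$ (i,j) = (\<Sum>k<m. P $$ (i,k) * A $$ (k,j))" by (rule mult_entry[OF P A ij])
    also have "\<dots> \<ge> 0" using Pnn Ann ij by (intro sum_nonneg mult_nonneg_nonneg) auto
    finally show ?thesis .
  qed
  have offd: "G $$ (i,j) = 0" if ij: "i < n" "j < n" "i \<noteq> j" for i j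
    using Dent[OF ij(1,2)] Dnn[OF ij(1,2)] Gnn[OF ij(1,2)] ij(3) by simp
  show "\<forall>i<n. \<forall>j<n. i \<noteq> j \<longrightarrow> (mp_inverse U * V) $$ (i,j) = 0"
    using offd unfolding G_def P_def by blast
  show "\<forall>i<n. 0 \<le> (mp_inverse U * V) $$ (i,i)"
    using Gnn unfolding G_def P_def by blast
  have ALU: "A * L * U = U"
  proof (rule mat_eq_by_vec[of _ m n])
    show "A * L * U \<in> carrier_mat m n" using A L U by auto
    show "U \<in> carrier_mat m n" by (rule U)
    fix v :: "real vec" assume v: "v \<in> carrier_vec n"
    have "U *\<^sub>v v \<in> range_mat U" unfolding range_mat_def using v U by auto
    then have "U *\<^sub>v v \<in> range_mat A" using rg by simp
    then obtain w where w: "w \<in> carrier_vec n" "U *\<^sub>v v = A *\<^sub>v w"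
      unfolding range_mat_def using A by auto
    have AL: "A * L \<in> carrier_mat m m" using A L by (rule mult_carrier_mat)
    have "(A * L * U) *\<^sub>v v = (A * L) *\<^sub>v (U *\<^sub>v v)" by (rule assoc_mult_mat_vec[OF AL U v])
    also have "\<dots> = (A * L) *\<^sub>v (A *\<^sub>v w)" unfolding w(2) ..
    also have "\<dots> = (A * L * A) *\<^sub>v w" by (rule assoc_mult_mat_vec[symmetric, OF AL A w(1)])
    also have "\<dots> = U *\<^sub>v v" unfolding ALA w(2) ..
    finally show "(A * L * U) *\<^sub>v v = U *\<^sub>v v" .
  qed
  have LUent: "(L * U) $$ (i,j) = (if i = j then 1 else 0) + F $$ (i,j)" if ij: "i < n" "j < n" for i j
  proof -
    have Uent: "U $$ (k,j) = A $$ (k,j) + V $$ (k,j)" if "k < m" for k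
      using Aent[OF that ij(2)] by simp
    have "(L * U) $$ (i,j) = (\<Sum>k<m. L $$ (i,k) * U $$ (k,j))" by (rule mult_entry[OF L U ij])
    also have "\<dots> = (\<Sum>k<m. L $$ (i,k) * A $$ (k,j)) + (\<Sum>k<m. L $$ (i,k) * V $$ (k,j))"
      using Uent by (simp add: distrib_left sum.distrib)
    also have "(\<Sum>k<m. L $$ (i,k) * A $$ (k,j)) = (L * A) $$ (i,j)" by (rule mult_entry[OF L A ij, symmetric])
    also have "(\<Sum>k<m. L $$ (i,k) * V $$ (k,j)) = F $$ (i,j)" unfolding F_def by (rule mult_entry[OF L V ij, symmetric])
    finally show ?thesis unfolding LA using ij by simp
  qed
  have PA: "P * A \<in> carrier_mat n n" using P A by (rule mult_carrier_mat)
  have LU: "L * U \<in> carrier_mat n n" using L U by (rule mult_carrier_mat)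
  have prod1: "(P * A) * (L * U) = 1\<^sub>m n"
  proof -
    have "(P * A) * (L * U) = P * (A * (L * U))" by (rule assoc_mult_mat[OF P A LU])
    also have "A * (L * U) = A * L * U" by (rule assoc_mult_mat[symmetric, OF A L U])
    finally show ?thesis unfolding ALU PU .
  qed
  show "\<forall>i<n. 0 < 1 + (L * V) $$ (i,i) \<and> (mp_inverse U * V) $$ (i,i) = 1 - 1 / (1 + (L * V) $$ (i,i))"
  proof (intro allI impI)
    fix i assume i: "i < n"
    have "1 = ((P * A) * (L * U)) $$ (i,i)" unfolding prod1 using i by simp
    also have "\<dots> = (\<Sum>c<n. (P * A) $$ (i,c) * (L * U) $$ (c,i))" by (rule mult_entry[OF PA LU i i])
    also have "\<dots> = (P * A) $$ (i,i) * (L * U) $$ (i,i)"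
    proof (rule sum_single[OF i])
      fix c assume c: "c < n" "c \<noteq> i"
      have "(P * A) $$ (i,c) = 0" using Dent[OF i c(1)] offd[OF i c(1)] c(2) by simp
      then show "(P * A) $$ (i,c) * (L * U) $$ (c,i) = 0" by simp
    qed
    also have "\<dots> = (1 - G $$ (i,i)) * (1 + F $$ (i,i))" using Dent[OF i i] LUent[OF i i] by simp
    finally have eq: "(1 - G $$ (i,i)) * (1 + F $$ (i,i)) = 1" by simp
    have d0: "1 - G $$ (i,i) \<ge> 0" using Dent[OF i i] Dnn[OF i i] by simp
    have dpos: "1 - G $$ (i,i) > 0" using d0 eq by (cases "1 - G $$ (i,i) = 0") auto
    have fpos: "1 + F $$ (i,i) > 0" using dpos eq
      by (metis less_numeral_extra(1) zero_less_mult_pos)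
    have "G $$ (i,i) = 1 - 1 / (1 + F $$ (i,i))" using eq fpos by (simp add: field_simps)
    then show "0 < 1 + (L * V) $$ (i,i) \<and> (mp_inverse U * V) $$ (i,i) = 1 - 1 / (1 + (L * V) $$ (i,i))"
      using fpos unfolding G_def F_def P_def by simp
  qed
qed

lemma diag_spec:
  fixes H :: "real mat"
  assumes H: "H \<in> carrier_mat n n" and n: "0 < n"
    and off: "\<And>i j. i < n \<Longrightarrow> j < n \<Longrightarrow> i \<noteq> j \<Longrightarrow> H $$ (i,j) = 0"
  shows "\<exists>i<n. spec_rad H = \<bar>H $$ (i,i)\<bar>" "\<And>i. i < n \<Longrightarrow> \<bar>H $$ (i,i)\<bar> \<le> spec_rad H"
proof -
  define C where "C = map_mat complex_of_real H"
  have C: "C \<in> carrier_mat n n" using H unfolding C_def by simp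
  have ut: "upper_triangular C" using H off unfolding C_def upper_triangular_def by auto
  have spec: "spectrum C = set (diag_mat C)"
  proof -
    have "spectrum C = {k. poly (char_poly C) k = 0}" by (rule spectrum_root_char_poly[OF C])
    also have "\<dots> = set (diag_mat C)"
      unfolding char_poly_upper_triangular[OF C ut] poly_prod_list
      by (auto simp: prod_list_zero_iff)
    finally show ?thesis .
  qed
  have sd: "set (diag_mat C) = (\<lambda>i. complex_of_real (H $$ (i,i))) ` {0..<n}"
    using H unfolding diag_mat_def C_def by auto
  have nsp: "norm ` spectrum C = (\<lambda>i. \<bar>H $$ (i,i)\<bar>) ` {0..<n}"
    unfolding spec sd image_image by simp
  have sr: "spec_rad H = spectral_radius C" unfolding spec_rad_def C_def ..
  from spectral_radius_mem_max(1)[OF C n] show "\<exists>i<n. spec_rad H = \<bar>H $$ (i,i)\<bar>"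
    unfolding sr nsp by auto
  fix i assume i: "i < n"
  have "\<bar>H $$ (i,i)\<bar> \<in> norm ` spectrum C" unfolding nsp using i by auto
  from spectral_radius_mem_max(2)[OF C n this] show "\<bar>H $$ (i,i)\<bar> \<le> spec_rad H" unfolding sr .
qed

lemma sum_scalar_zero:
  fixes x y :: "real vec"
  assumes x: "x \<in> carrier_vec n" and y: "y \<in> carrier_vec n"
    and h: "\<And>k. k < p \<Longrightarrow> E k \<in> carrier_mat n n \<and> y \<bullet> (E k *\<^sub>v x) = 0"
  shows "y \<bullet> (mat_sum n n E p *\<^sub>v x) = 0"
  using h
proof (induction p)
  case 0
  have "0\<^sub>m n n *\<^sub>v x = 0\<^sub>v n" using x by (intro eq_vecI) auto
  then show ?case using y by simp
next
  case (Suc p)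
  have Ms: "mat_sum n n E p \<in> carrier_mat n n" using Suc.prems by (intro mat_sum_carrier) auto
  have Ep: "E p \<in> carrier_mat n n" "y \<bullet> (E p *\<^sub>v x) = 0" using Suc.prems by auto
  have "(mat_sum n n E p + E p) *\<^sub>v x = mat_sum n n E p *\<^sub>v x + E p *\<^sub>v x"
    by (rule add_mult_distrib_mat_vec[OF Ms Ep(1) x])
  moreover have "y \<bullet> (mat_sum n n E p *\<^sub>v x + E p *\<^sub>v x) = y \<bullet> (mat_sum n n E p *\<^sub>v x) + y \<bullet> (E p *\<^sub>v x)"
    by (rule scalar_prod_add_distrib[OF y]) (use Ms Ep x in auto)
  ultimately show ?case using Suc Ep by simp
qed

lemma iter_entry:
  fixes E P V :: "nat \<Rightarrow> real mat"
  assumes c: "\<And>k. k < p \<Longrightarrow> E k \<in> carrier_mat n n \<and> diagonal_mat (E k) \<and> P k \<in> carrier_mat n m \<and> V k \<in> carrier_mat m n"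
    and off: "\<And>k i j. k < p \<Longrightarrow> i < n \<Longrightarrow> j < n \<Longrightarrow> i \<noteq> j \<Longrightarrow> (P k * V k) $$ (i,j) = 0"
  shows "mat_sum n n (\<lambda>k. E k * P k * V k) p \<in> carrier_mat n n"
    "\<And>a b. a < n \<Longrightarrow> b < n \<Longrightarrow> mat_sum n n (\<lambda>k. E k * P k * V k) p $$ (a,b) =
        (if a = b then (\<Sum>k<p. E k $$ (a,a) * (P k * V k) $$ (a,a)) else 0)"
proof -
  have cr: "E k * P k * V k \<in> carrier_mat n n" if "k < p" for k using c[OF that] by auto
  show "mat_sum n n (\<lambda>k. E k * P k * V k) p \<in> carrier_mat n n" by (rule mat_sum_carrier) (rule cr)
  fix a b assume ab: "a < n" "b < n"
  have ent: "(E k * P k * V k) $$ (a,b) = E k $$ (a,a) * (P k * V k) $$ (a,b)" if k: "k < p" for k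
  proof -
    have Ek: "E k \<in> carrier_mat n n" "diagonal_mat (E k)" and Pk: "P k \<in> carrier_mat n m"
      and Vk: "V k \<in> carrier_mat m n" using c[OF k] by auto
    have G: "P k * V k \<in> carrier_mat n n" using Pk Vk by (rule mult_carrier_mat)
    have "E k * P k * V k = E k * (P k * V k)" by (rule assoc_mult_mat[OF Ek(1) Pk Vk])
    then have "(E k * P k * V k) $$ (a,b) = (\<Sum>c<n. E k $$ (a,c) * (P k * V k) $$ (c,b))"
      using mult_entry[OF Ek(1) G ab] by simp
    also have "\<dots> = E k $$ (a,a) * (P k * V k) $$ (a,b)"
    proof (rule sum_single[OF ab(1)])
      fix c assume "c < n" "c \<noteq> a"
      then have "E k $$ (a,c) = 0" using Ek ab unfolding diagonal_mat_def by auto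
      then show "E k $$ (a,c) * (P k * V k) $$ (c,b) = 0" by simp
    qed
    finally show ?thesis .
  qed
  have "mat_sum n n (\<lambda>k. E k * P k * V k) p $$ (a,b) = (\<Sum>k<p. (E k * P k * V k) $$ (a,b))"
    by (rule mat_sum_index[OF cr ab])
  also have "\<dots> = (\<Sum>k<p. E k $$ (a,a) * (P k * V k) $$ (a,b))" using ent by simp
  also have "\<dots> = (if a = b then (\<Sum>k<p. E k $$ (a,a) * (P k * V k) $$ (a,a)) else 0)"
    using off ab by auto
  finally show "mat_sum n n (\<lambda>k. E k * P k * V k) p $$ (a,b) =
        (if a = b then (\<Sum>k<p. E k $$ (a,a) * (P k * V k) $$ (a,a)) else 0)" .
qed

theorem theorem5p11:
  fixes A :: "real mat" and m n p :: nat
    and U1 V1 U2 V2 E :: "nat \<Rightarrow> real mat"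
  assumes "A \<in> carrier_mat m n" and "0 < m" and "0 < n" and "0 < p"
    and "0\<^sub>m m n \<le> A" and "0\<^sub>m n m \<le> mp_inverse A"
    and "proper_weak_regular_multisplitting A p U1 V1 E"
    and "proper_weak_regular_multisplitting A p U2 V2 E"
    and "\<forall>k<p. range_mat (E k) \<subseteq> range_mat (transpose_mat A)"
    and "\<forall>k<p. V1 k \<le> V2 k"
  shows "spec_rad (iter_mat A p U1 V1 E) \<le> spec_rad (iter_mat A p U2 V2 E)
         \<and> spec_rad (iter_mat A p U2 V2 E) < 1"
proof -
  note A = assms(1) and n = assms(3) and Apos = assms(5) and Lpos = assms(6)
  have dA: "dim_col A = n" "dim_row A = m" using A by auto
  have S1: "\<And>k. k < p \<Longrightarrow> proper_weak_regular_splitting A (U1 k) (V1 k)"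
    and S2: "\<And>k. k < p \<Longrightarrow> proper_weak_regular_splitting A (U2 k) (V2 k)"
    and Ec: "\<And>k. k < p \<Longrightarrow> E k \<in> carrier_mat n n \<and> diagonal_mat (E k) \<and> 0\<^sub>m n n \<le> E k"
    and Esum: "mat_sum n n E p = 1\<^sub>m n"
    using assms(7,8) unfolding proper_weak_regular_multisplitting_def dA by auto
  have Ainj: "\<forall>x. x \<in> carrier_vec n \<longrightarrow> A *\<^sub>v x = 0\<^sub>v m \<longrightarrow> x = 0\<^sub>v n"
  proof (intro allI impI)
    fix x assume x: "x \<in> carrier_vec n" "A *\<^sub>v x = 0\<^sub>v m"
    have "x \<bullet> (mat_sum n n E p *\<^sub>v x) = 0"
    proof (rule sum_scalar_zero[OF x(1) x(1)])
      fix k assume k: "k < p"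
      have Ek: "E k \<in> carrier_mat n n" using Ec[OF k] by auto
      have "E k *\<^sub>v x \<in> range_mat (E k)" unfolding range_mat_def using x Ek by auto
      then have "E k *\<^sub>v x \<in> range_mat (transpose_mat A)" using assms(9) k by auto
      then obtain y where y: "y \<in> carrier_vec m" "E k *\<^sub>v x = transpose_mat A *\<^sub>v y"
        unfolding range_mat_def using A by auto
      have "x \<bullet> (E k *\<^sub>v x) = (transpose_mat A *\<^sub>v y) \<bullet> x" unfolding y(2)
        by (rule comm_scalar_prod[of _ n]) (use x y A in auto)
      also have "\<dots> = y \<bullet> (A *\<^sub>v x)" by (rule transpose_vec_mult_scalar[OF A x(1) y(1)])
      also have "\<dots> = 0" unfolding x(2) using y(1) by simp
      finally show "E k \<in> carrier_mat n n \<and> x \<bullet> (E k *\<^sub>v x) = 0" using Ek by simp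
    qed
    then have "x \<bullet> x = 0" unfolding Esum using x by simp
    then show "x = 0\<^sub>v n" using self_scalar_zero x by blast
  qed
  define L where "L = mp_inverse A"
  from mp_left_inv[OF A Ainj] have L: "L \<in> carrier_mat n m" and LA: "L * A = 1\<^sub>m n"
    and ALA: "A * L * A = A" unfolding L_def by auto
  note sd1 = split_diag[OF A Apos L LA ALA Ainj S1]
  note sd2 = split_diag[OF A Apos L LA ALA Ainj S2]
  define g1 where "g1 k j = (mp_inverse (U1 k) * V1 k) $$ (j,j)" for k j
  define g2 where "g2 k j = (mp_inverse (U2 k) * V2 k) $$ (j,j)" for k j
  define e where "e k j = E k $$ (j,j)" for k j
  have Vc1: "V1 k \<in> carrier_mat m n" and Vc2: "V2 k \<in> carrier_mat m n" if "k < p" for k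
    using S1[OF that] S2[OF that] A
    unfolding proper_weak_regular_splitting_def proper_splitting_def by auto
  have Lnn: "L $$ (i,c) \<ge> 0" if "i < n" "c < m" for i c
    using Lpos that L unfolding less_eq_mat_def L_def by auto
  have gmono: "g1 k j \<le> g2 k j" and g2lt: "g2 k j < 1" and g1nn: "0 \<le> g1 k j"
    if k: "k < p" and j: "j < n" for k j
  proof -
    have "(L * V1 k) $$ (j,j) \<le> (L * V2 k) $$ (j,j)"
    proof -
      have "(L * V1 k) $$ (j,j) = (\<Sum>c<m. L $$ (j,c) * V1 k $$ (c,j))" by (rule mult_entry[OF L Vc1[OF k] j j])
      also have "\<dots> \<le> (\<Sum>c<m. L $$ (j,c) * V2 k $$ (c,j))"
      proof (rule sum_mono)
        fix c assume c: "c \<in> {..<m}"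
        have "V1 k $$ (c,j) \<le> V2 k $$ (c,j)" using assms(10) k c j Vc2[OF k] unfolding less_eq_mat_def by auto
        then show "L $$ (j,c) * V1 k $$ (c,j) \<le> L $$ (j,c) * V2 k $$ (c,j)"
          using Lnn[OF j] c by (intro mult_left_mono) auto
      qed
      also have "\<dots> = (L * V2 k) $$ (j,j)" by (rule mult_entry[OF L Vc2[OF k] j j, symmetric])
      finally show ?thesis .
    qed
    moreover have a1: "0 < 1 + (L * V1 k) $$ (j,j)" "g1 k j = 1 - 1 / (1 + (L * V1 k) $$ (j,j))"
      using sd1(4) k j unfolding g1_def by auto
    moreover have a2: "0 < 1 + (L * V2 k) $$ (j,j)" "g2 k j = 1 - 1 / (1 + (L * V2 k) $$ (j,j))"
      using sd2(4) k j unfolding g2_def by auto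
    ultimately have "1 / (1 + (L * V2 k) $$ (j,j)) \<le> 1 / (1 + (L * V1 k) $$ (j,j))"
      by (intro divide_left_mono) auto
    then show "g1 k j \<le> g2 k j" using a1 a2 by simp
    show "g2 k j < 1" using a2 by simp
    show "0 \<le> g1 k j" using sd1(5) k j unfolding g1_def by auto
  qed
  have enn: "0 \<le> e k j" if "k < p" "j < n" for k j
  proof -
    have "0\<^sub>m n n \<le> E k" using Ec[OF that(1)] by blast
    then show ?thesis using that unfolding less_eq_mat_def e_def by auto
  qed
  have esum: "(\<Sum>k<p. e k j) = 1" if j: "j < n" for j
  proof -
    have "mat_sum n n E p $$ (j,j) = (\<Sum>k<p. E k $$ (j,j))" by (rule mat_sum_index) (use Ec j in blast)+
    then show ?thesis unfolding Esum e_def using j by simp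
  qed
  have c1: "E k \<in> carrier_mat n n \<and> diagonal_mat (E k) \<and> mp_inverse (U1 k) \<in> carrier_mat n m \<and> V1 k \<in> carrier_mat m n"
    if k: "k < p" for k
    using Ec[OF k] sd1(1)[OF k] Vc1[OF k] by simp
  have c2: "E k \<in> carrier_mat n n \<and> diagonal_mat (E k) \<and> mp_inverse (U2 k) \<in> carrier_mat n m \<and> V2 k \<in> carrier_mat m n"
    if k: "k < p" for k
    using Ec[OF k] sd2(1)[OF k] Vc2[OF k] by simp
  have o1: "(mp_inverse (U1 k) * V1 k) $$ (i,j) = 0" if "k < p" "i < n" "j < n" "i \<noteq> j" for k i j
    using sd1(3)[OF that(1)] that(2-4) by simp
  have o2: "(mp_inverse (U2 k) * V2 k) $$ (i,j) = 0" if "k < p" "i < n" "j < n" "i \<noteq> j" for k i j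
    using sd2(3)[OF that(1)] that(2-4) by simp
  have ie1c: "mat_sum n n (\<lambda>k. E k * mp_inverse (U1 k) * V1 k) p \<in> carrier_mat n n"
    by (rule iter_entry(1)[of p E n "\<lambda>k. mp_inverse (U1 k)" m V1]) (use c1 o1 in auto)
  have ie2c: "mat_sum n n (\<lambda>k. E k * mp_inverse (U2 k) * V2 k) p \<in> carrier_mat n n"
    by (rule iter_entry(1)[of p E n "\<lambda>k. mp_inverse (U2 k)" m V2]) (use c2 o2 in auto)
  have ie1e: "mat_sum n n (\<lambda>k. E k * mp_inverse (U1 k) * V1 k) p $$ (a,b) =
        (if a = b then (\<Sum>k<p. E k $$ (a,a) * (mp_inverse (U1 k) * V1 k) $$ (a,a)) else 0)"
    if "a < n" "b < n" for a b
    by (rule iter_entry(2)[of p E n "\<lambda>k. mp_inverse (U1 k)" m V1]) (use c1 o1 that in auto)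
  have ie2e: "mat_sum n n (\<lambda>k. E k * mp_inverse (U2 k) * V2 k) p $$ (a,b) =
        (if a = b then (\<Sum>k<p. E k $$ (a,a) * (mp_inverse (U2 k) * V2 k) $$ (a,a)) else 0)"
    if "a < n" "b < n" for a b
    by (rule iter_entry(2)[of p E n "\<lambda>k. mp_inverse (U2 k)" m V2]) (use c2 o2 that in auto)
  define H1 where "H1 = iter_mat A p U1 V1 E"
  define H2 where "H2 = iter_mat A p U2 V2 E"
  have H1: "H1 \<in> carrier_mat n n" and H2: "H2 \<in> carrier_mat n n"
    unfolding H1_def H2_def iter_mat_def dA using ie1c ie2c by auto
  have H1e: "H1 $$ (a,b) = (if a = b then (\<Sum>k<p. e k a * g1 k a) else 0)" if "a < n" "b < n" for a b
    unfolding H1_def iter_mat_def dA ie1e[OF that] e_def g1_def by simp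
  have H2e: "H2 $$ (a,b) = (if a = b then (\<Sum>k<p. e k a * g2 k a) else 0)" if "a < n" "b < n" for a b
    unfolding H2_def iter_mat_def dA ie2e[OF that] e_def g2_def by simp
  have h12: "0 \<le> H1 $$ (a,a) \<and> H1 $$ (a,a) \<le> H2 $$ (a,a)" if a: "a < n" for a
  proof -
    have "0 \<le> (\<Sum>k<p. e k a * g1 k a)" using enn g1nn a by (intro sum_nonneg mult_nonneg_nonneg) auto
    moreover have "(\<Sum>k<p. e k a * g1 k a) \<le> (\<Sum>k<p. e k a * g2 k a)"
      using enn gmono a by (intro sum_mono mult_left_mono) auto
    ultimately show ?thesis using H1e[OF a a] H2e[OF a a] by simp
  qed
  have h2: "0 \<le> H2 $$ (a,a) \<and> H2 $$ (a,a) < 1" if a: "a < n" for a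
  proof -
    have nn: "0 \<le> H2 $$ (a,a)" using h12[OF a] by linarith
    obtain k0 where k0: "k0 < p" "0 < e k0 a"
    proof (rule ccontr)
      assume "\<not> thesis"
      then have "\<forall>k<p. e k a \<le> 0" using that by force
      then have "(\<Sum>k<p. e k a) \<le> 0" by (intro sum_nonpos) auto
      then show False using esum[OF a] by simp
    qed
    have "(\<Sum>k<p. e k a * g2 k a) < (\<Sum>k<p. e k a)"
    proof (rule sum_strict_mono_ex1)
      show "finite {..<p}" by simp
      show "\<forall>k\<in>{..<p}. e k a * g2 k a \<le> e k a"
      proof
        fix k assume k: "k \<in> {..<p}"
        then have "0 \<le> e k a" "g2 k a \<le> 1" using enn g2lt a by (auto simp: less_imp_le)
        then show "e k a * g2 k a \<le> e k a" by (rule mult_left_le[rotated])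
      qed
      show "\<exists>k\<in>{..<p}. e k a * g2 k a < e k a"
        using k0 g2lt[OF k0(1) a] by (intro bexI[of _ k0]) auto
    qed
    then show ?thesis using nn H2e[OF a a] esum[OF a] by simp
  qed
  have off1: "\<And>i j. i < n \<Longrightarrow> j < n \<Longrightarrow> i \<noteq> j \<Longrightarrow> H1 $$ (i,j) = 0" using H1e by simp
  have off2: "\<And>i j. i < n \<Longrightarrow> j < n \<Longrightarrow> i \<noteq> j \<Longrightarrow> H2 $$ (i,j) = 0" using H2e by simp
  have ds1: "\<exists>i<n. spec_rad H1 = \<bar>H1 $$ (i,i)\<bar>"
    by (rule diag_spec(1)[OF H1 n]) (use off1 in auto)
  have ds2: "\<exists>i<n. spec_rad H2 = \<bar>H2 $$ (i,i)\<bar>"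
    by (rule diag_spec(1)[OF H2 n]) (use off2 in auto)
  have ds2b: "\<bar>H2 $$ (i,i)\<bar> \<le> spec_rad H2" if "i < n" for i
    by (rule diag_spec(2)[OF H2 n]) (use off2 that in auto)
  obtain a where a: "a < n" "spec_rad H1 = \<bar>H1 $$ (a,a)\<bar>" using ds1 by blast
  obtain b where b: "b < n" "spec_rad H2 = \<bar>H2 $$ (b,b)\<bar>" using ds2 by blast
  have "spec_rad H1 \<le> \<bar>H2 $$ (a,a)\<bar>" using a h12[OF a(1)] by simp
  also have "\<dots> \<le> spec_rad H2" by (rule ds2b[OF a(1)])
  finally have "spec_rad H1 \<le> spec_rad H2" .
  moreover have "spec_rad H2 < 1" using b h2[OF b(1)] by simp
  ultimately show ?thesis unfolding H1_def H2_def by simp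
qed

end
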